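(* Let $X$ be a finite alphabet with at least two letters and $k\ge2$. For every $F\in\mathcal F_{\mathcal T_k}$, the class $\mathcal R\mathbf\Sigma(F)$ is closed under $\le_{DA}$ and the class $\mathcal A\mathbf\Sigma(F)$ is closed under $\le_{AA}$; that is, if $B\le_{DA}A\in\mathcal R\mathbf\Sigma(F)$ then $B\in\mathcal R\mathbf\Sigma(F)$, and if $B\le_{AA}A\in\mathcal A\mathbf\Sigma(F)$ then $B\in\mathcal A\mathbf\Sigma(F)$.
   Context: $\bar k=\{0,\dots,k-1\}$; $\mathcal R$ ($\mathcal A$) is the class of regular (aperiodic) $\omega$-languages over $X$ (recognised by deterministic Muller acceptors, resp. with aperiodic automaton). Forests are finite $F\subseteq\omega^+$ closed under nonempty prefixes (prefix order), trees finite prefix-closed $V\subseteq\omega^*$; $\mathcal T_k$ = $\bar k$-labeled trees; $\mathcal F_{\mathcal T_k}$ = forests $(F,c)$ labeled by elements of $\mathcal T_k$. For a 2-base $\mathcal L=(\mathcal L_0,\mathcal L_1)$ in $S$ and $(F,c)\in\mathcal F_{\mathcal T_k}$, an $F$-family is $\{U_\tau\}_{\tau\in F}\subseteq\mathcal L_0$ with $U_{\tau i}\subseteq U_\tau$, $\bigcup U_\tau=S$, together with, for each $\tau$ with $c(\tau)=(V,v)$, sets $U_{\tau\sigma}=\tilde U_\tau\cap B_{\tau\sigma}$, $B_{\tau\sigma}\in\mathcal L_1$, $\sigma\in V$, with $U_{\tau\sigma i}\subseteq U_{\tau\sigma}$ and $\bigcup_\sigma U_{\tau\sigma}=\tilde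 U_\tau$, where $\tilde U_\tau=U_\tau\setminus\bigcup_{\tau i\in F}U_{\tau i}$; it determines $A:S\to\bar k$ if $A(x)=v(\sigma)$ whenever $x\in U_{\tau\sigma}\setminus\bigcup_{\sigma i\in V}U_{\tau\sigma i}$. $\mathcal L(F)$ is the set of $k$-partitions determined by some $F$-family. $\mathcal R\mathbf\Sigma=(\mathcal R\cap\mathbf\Sigma^0_1,\mathcal R\cap\mathbf\Sigma^0_2)$ and $\mathcal A\mathbf\Sigma=(\mathcal A\cap\mathbf\Sigma^0_1,\mathcal A\cap\mathbf\Sigma^0_2)$, where $\mathbf\Sigma^0_1$ are the open sets and $\mathbf\Sigma^0_2$ the countable unions of closed sets of $X^\omega$. DA-functions (AA-functions) are functions $X^\omega\to X^\omega$ computed by asynchronous transducers (automaton plus output $g:Q\times X\to X^*$; with aperiodic automaton for AA); $B\le_{DA}A$ ($B\le_{AA}A$) iff $B=A\circ h$ for some such $h$. *)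

theory Defs
  imports Main
begin

definition wf_aut :: "nat set \<Rightarrow> nat \<Rightarrow> (nat \<Rightarrow> 'x \<Rightarrow> nat) \<Rightarrow> bool" where
  "wf_aut Q q0 d \<longleftrightarrow> finite Q \<and> q0 \<in> Q \<and> (\<forall>q\<in>Q. \<forall>a. d q a \<in> Q)"

definition dstar :: "(nat \<Rightarrow> 'x \<Rightarrow> nat) \<Rightarrow> nat \<Rightarrow> 'x list \<Rightarrow> nat" where
  "dstar d q u = foldl d q u"

text \<open>Aperiodic automaton: its transition monoid is aperiodic.\<close>
definition aperiodic_aut :: "nat set \<Rightarrow> (nat \<Rightarrow> 'x \<Rightarrow> nat) \<Rightarrow> bool" where
  "aperiodic_aut Q d \<longleftrightarrow> (\<exists>m. \<forall>u :: 'x list. \<forall>q\<in>Q.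
      dstar d q (concat (replicate m u)) = dstar d q (concat (replicate (Suc m) u)))"

primrec run :: "(nat \<Rightarrow> 'x \<Rightarrow> nat) \<Rightarrow> nat \<Rightarrow> (nat \<Rightarrow> 'x) \<Rightarrow> nat \<Rightarrow> nat" where
  "run d q0 w 0 = q0"
| "run d q0 w (Suc n) = d (run d q0 w n) (w n)"

definition muller_lang :: "nat \<Rightarrow> (nat \<Rightarrow> 'x \<Rightarrow> nat) \<Rightarrow> nat set set \<Rightarrow> (nat \<Rightarrow> 'x) set" where
  "muller_lang q0 d T = {w. {q. \<exists>\<^sub>\<infinity>n. run d q0 w n = q} \<in> T}"

definition regular_omega :: "(nat \<Rightarrow> 'x) set \<Rightarrow> bool" where
  "regular_omega L \<longleftrightarrow> (\<exists>Q q0 d T. wf_aut Q q0 d \<and> L = muller_lang q0 d T)"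

definition aperiodic_omega :: "(nat \<Rightarrow> 'x) set \<Rightarrow> bool" where
  "aperiodic_omega L \<longleftrightarrow>
     (\<exists>Q q0 d T. wf_aut Q q0 d \<and> aperiodic_aut Q d \<and> L = muller_lang q0 d T)"

definition open_omega :: "(nat \<Rightarrow> 'x) set \<Rightarrow> bool" where
  "open_omega A \<longleftrightarrow> (\<forall>w\<in>A. \<exists>n. \<forall>v. (\<forall>i<n. v i = w i) \<longrightarrow> v \<in> A)"

definition closed_omega :: "(nat \<Rightarrow> 'x) set \<Rightarrow> bool" where
  "closed_omega A \<longleftrightarrow> open_omega (- A)"

definition sigma02 :: "(nat \<Rightarrow> 'x) set \<Rightarrow> bool" where
  "sigma02 A \<longleftrightarrow> (\<exists>C :: nat \<Rightarrow> (nat \<Rightarrow> 'x) set. (\<forall>i. closed_omega (C i)) \<and> A = (\<Union>i. C i))"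

definition forest :: "nat list set \<Rightarrow> bool" where
  "forest F \<longleftrightarrow> finite F \<and> [] \<notin> F \<and>
     (\<forall>\<tau>\<in>F. \<forall>\<rho> \<rho>'. \<tau> = \<rho> @ \<rho>' \<and> \<rho> \<noteq> [] \<longrightarrow> \<rho> \<in> F)"

definition tree :: "nat list set \<Rightarrow> bool" where
  "tree V \<longleftrightarrow> finite V \<and> [] \<in> V \<and> (\<forall>\<sigma>\<in>V. \<forall>\<rho> \<rho>'. \<sigma> = \<rho> @ \<rho>' \<longrightarrow> \<rho> \<in> V)"

definition labeled_tree :: "nat \<Rightarrow> nat list set \<times> (nat list \<Rightarrow> nat) \<Rightarrow> bool" where
  "labeled_tree k T \<longleftrightarrow> tree (fst T) \<and> (\<forall>\<sigma>\<in>fst T. snd T \<sigma> < k)"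

definition forest_Tk :: "nat \<Rightarrow> nat list set \<Rightarrow> (nat list \<Rightarrow> nat list set \<times> (nat list \<Rightarrow> nat)) \<Rightarrow> bool" where
  "forest_Tk k F c \<longleftrightarrow> forest F \<and> (\<forall>\<tau>\<in>F. labeled_tree k (c \<tau>))"

text \<open>The class L(F) for a 2-base (L0,L1) in the space S = UNIV: the k-partitions
  A : S -> {0..<k} determined by some F-family.  U is the family U_tau, B gives the
  sets B_{tau sigma} in L1, and U_{tau sigma} = Utilde_tau \<inter> B_{tau sigma}.\<close>
definition Lclass ::
  "'a set set \<Rightarrow> 'a set set \<Rightarrow> nat \<Rightarrow> nat list set \<Rightarrow> (nat list \<Rightarrow> nat list set \<times> (nat list \<Rightarrow> nat))
    \<Rightarrow> ('a \<Rightarrow> nat) set" where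
  "Lclass L0 L1 k F c = {A. (\<forall>x. A x < k) \<and>
     (\<exists>(U :: nat list \<Rightarrow> 'a set) (B :: nat list \<Rightarrow> nat list \<Rightarrow> 'a set).
        let Ut = (\<lambda>\<tau>. U \<tau> - (\<Union>i\<in>{i. \<tau> @ [i] \<in> F}. U (\<tau> @ [i])));
            W = (\<lambda>\<tau> \<sigma>. Ut \<tau> \<inter> B \<tau> \<sigma>) in
        (\<forall>\<tau>\<in>F. U \<tau> \<in> L0)
      \<and> (\<forall>\<tau> i. \<tau> @ [i] \<in> F \<longrightarrow> \<tau> \<in> F \<longrightarrow> U (\<tau> @ [i]) \<subseteq> U \<tau>)
      \<and> (\<Union>\<tau>\<in>F. U \<tau>) = UNIV
      \<and> (\<forall>\<tau>\<in>F. (\<forall>\<sigma>\<in>fst (c \<tau>). B \<tau> \<sigma> \<in> L1)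
          \<and> (\<forall>\<sigma> i. \<sigma> @ [i] \<in> fst (c \<tau>) \<longrightarrow> W \<tau> (\<sigma> @ [i]) \<subseteq> W \<tau> \<sigma>)
          \<and> (\<Union>\<sigma>\<in>fst (c \<tau>). W \<tau> \<sigma>) = Ut \<tau>
          \<and> (\<forall>\<sigma>\<in>fst (c \<tau>). \<forall>x.
               x \<in> W \<tau> \<sigma> - (\<Union>i\<in>{i. \<sigma> @ [i] \<in> fst (c \<tau>)}. W \<tau> (\<sigma> @ [i]))
               \<longrightarrow> A x = snd (c \<tau>) \<sigma>)))}"

definition RSigma_F :: "nat \<Rightarrow> nat list set \<Rightarrow> (nat list \<Rightarrow> nat list set \<times> (nat list \<Rightarrow> nat))
    \<Rightarrow> ((nat \<Rightarrow> 'x) \<Rightarrow> nat) set" where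
  "RSigma_F k F c = Lclass {L. regular_omega L \<and> open_omega L} {L. regular_omega L \<and> sigma02 L} k F c"

definition ASigma_F :: "nat \<Rightarrow> nat list set \<Rightarrow> (nat list \<Rightarrow> nat list set \<times> (nat list \<Rightarrow> nat))
    \<Rightarrow> ((nat \<Rightarrow> 'x) \<Rightarrow> nat) set" where
  "ASigma_F k F c = Lclass {L. aperiodic_omega L \<and> open_omega L} {L. aperiodic_omega L \<and> sigma02 L} k F c"

definition trans_out :: "nat \<Rightarrow> (nat \<Rightarrow> 'x \<Rightarrow> nat) \<Rightarrow> (nat \<Rightarrow> 'x \<Rightarrow> 'x list) \<Rightarrow> (nat \<Rightarrow> 'x) \<Rightarrow> nat \<Rightarrow> 'x list" where
  "trans_out q0 d g w n = concat (map (\<lambda>i. g (run d q0 w i) (w i)) [0..<n])"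

definition computes :: "nat \<Rightarrow> (nat \<Rightarrow> 'x \<Rightarrow> nat) \<Rightarrow> (nat \<Rightarrow> 'x \<Rightarrow> 'x list) \<Rightarrow> ((nat \<Rightarrow> 'x) \<Rightarrow> (nat \<Rightarrow> 'x)) \<Rightarrow> bool" where
  "computes q0 d g h \<longleftrightarrow> (\<forall>w.
      (\<forall>m. \<exists>n. m < length (trans_out q0 d g w n))
    \<and> (\<forall>n j. j < length (trans_out q0 d g w n) \<longrightarrow> h w j = trans_out q0 d g w n ! j))"

definition DA_function :: "((nat \<Rightarrow> 'x) \<Rightarrow> (nat \<Rightarrow> 'x)) \<Rightarrow> bool" where
  "DA_function h \<longleftrightarrow> (\<exists>Q q0 d g. wf_aut Q q0 d \<and> computes q0 d g h)"

definition AA_function :: "((nat \<Rightarrow> 'x) \<Rightarrow> (nat \<Rightarrow> 'x)) \<Rightarrow> bool" where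
  "AA_function h \<longleftrightarrow> (\<exists>Q q0 d g. wf_aut Q q0 d \<and> aperiodic_aut Q d \<and> computes q0 d g h)"

definition DA_reducible :: "((nat \<Rightarrow> 'x) \<Rightarrow> nat) \<Rightarrow> ((nat \<Rightarrow> 'x) \<Rightarrow> nat) \<Rightarrow> bool" where
  "DA_reducible B A \<longleftrightarrow> (\<exists>h. DA_function h \<and> B = A \<circ> h)"

definition AA_reducible :: "((nat \<Rightarrow> 'x) \<Rightarrow> nat) \<Rightarrow> ((nat \<Rightarrow> 'x) \<Rightarrow> nat) \<Rightarrow> bool" where
  "AA_reducible B A \<longleftrightarrow> (\<exists>h. AA_function h \<and> B = A \<circ> h)"

end

theory Submission
  imports Defs "HOL-Library.Infinite_Set" "HOL-Library.Nat_Bijection"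
begin


definition enc :: "nat \<Rightarrow> nat \<Rightarrow> nat set \<Rightarrow> nat" where
  "enc q p S = prod_encode (q, prod_encode (p, set_encode S))"
definition pq :: "nat \<Rightarrow> nat" where "pq x = fst (prod_decode x)"
definition pp :: "nat \<Rightarrow> nat" where "pp x = fst (prod_decode (snd (prod_decode x)))"
definition pS :: "nat \<Rightarrow> nat set" where "pS x = set_decode (snd (prod_decode (snd (prod_decode x))))"

lemma enc_simps[simp]: "pq (enc q p S) = q" "pp (enc q p S) = p" "finite S \<Longrightarrow> pS (enc q p S) = S"
  by (simp_all add: enc_def pq_def pp_def pS_def)

definition visited :: "(nat \<Rightarrow> 'x \<Rightarrow> nat) \<Rightarrow> nat \<Rightarrow> 'x list \<Rightarrow> nat set" where
  "visited e p v = (\<lambda>i. dstar e p (take i v)) ` {..<length v}"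

primrec gstar :: "(nat \<Rightarrow> 'x \<Rightarrow> nat) \<Rightarrow> (nat \<Rightarrow> 'x \<Rightarrow> 'x list) \<Rightarrow> nat \<Rightarrow> 'x list \<Rightarrow> 'x list" where
  "gstar d g q [] = []"
| "gstar d g q (a # u) = g q a @ gstar d g (d q a) u"

definition dprod :: "(nat \<Rightarrow> 'x \<Rightarrow> nat) \<Rightarrow> (nat \<Rightarrow> 'x \<Rightarrow> 'x list) \<Rightarrow> (nat \<Rightarrow> 'x \<Rightarrow> nat) \<Rightarrow> nat \<Rightarrow> 'x \<Rightarrow> nat" where
  "dprod d g e x a = enc (d (pq x) a) (dstar e (pp x) (g (pq x) a)) (visited e (pp x) (g (pq x) a))"

lemma dstar_simps[simp]: "dstar d q [] = q" "dstar d q (a # u) = dstar d (d q a) u"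
  "dstar d q (u @ v) = dstar d (dstar d q u) v"
  by (simp_all add: dstar_def)

lemma finite_visited[simp]: "finite (visited e p v)" by (simp add: visited_def)

lemma dstar_in: "wf_aut Q q0 d \<Longrightarrow> q \<in> Q \<Longrightarrow> dstar d q u \<in> Q"
  by (induction u arbitrary: q) (auto simp: wf_aut_def)

lemma run_in: "wf_aut Q q0 d \<Longrightarrow> run d q0 w n \<in> Q"
  by (induction n) (auto simp: wf_aut_def)

lemma visited_in: "wf_aut Q q0 d \<Longrightarrow> q \<in> Q \<Longrightarrow> visited d q u \<subseteq> Q"
  by (auto simp: visited_def dstar_in)

lemma dprod_proj:
  "pq (dstar (dprod d g e) x u) = dstar d (pq x) u \<and>
   pp (dstar (dprod d g e) x u) = dstar e (pp x) (gstar d g (pq x) u)"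
  by (induction u arbitrary: x) (auto simp: dprod_def)

lemma gstar_append: "gstar d g q (u @ v) = gstar d g q u @ gstar d g (dstar d q u) v"
  by (induction u arbitrary: q) auto

lemma dstar_det:
  assumes "u \<noteq> []" "pq x = pq y" "pp x = pp y"
  shows "dstar (dprod d g e) x u = dstar (dprod d g e) y u"
proof -
  obtain u' a where u: "u = u' @ [a]" using assms(1) by (metis rev_exhaust)
  show ?thesis using dprod_proj[of d g e x u'] dprod_proj[of d g e y u'] assms
    by (simp add: u dprod_def)
qed

definition pw :: "'x list \<Rightarrow> nat \<Rightarrow> 'x list" where "pw u n = concat (replicate n u)"

lemma pw_simps[simp]: "pw u 0 = []" "pw u (Suc n) = u @ pw u n" "pw u (a + b) = pw u a @ pw u b"
  by (simp_all add: pw_def replicate_add)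

lemma pw_Suc2: "pw u (Suc n) = pw u n @ u"
  by (induction n) simp_all

lemma stable:
  assumes "dstar f s (pw u m) = dstar f s (pw u (Suc m))"
  shows "dstar f s (pw u (m + j)) = dstar f s (pw u m)"
proof -
  let ?t = "dstar f s (pw u m)"
  have t: "dstar f ?t u = ?t" using assms by (simp only: pw_Suc2 dstar_simps(3))
  have "dstar f ?t (pw u j) = ?t" for j by (induction j) (simp_all add: t)
  then show ?thesis by simp
qed

lemma gstar_pw: "dstar d q u = q \<Longrightarrow> gstar d g q (pw u j) = pw (gstar d g q u) j"
  by (induction j) (simp_all add: gstar_append)

definition Qprod :: "nat set \<Rightarrow> nat set \<Rightarrow> nat set" where
  "Qprod Q P = (\<lambda>(q,p,S). enc q p S) ` (Q \<times> P \<times> Pow P)"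

lemma Qprod_E:
  assumes "x \<in> Qprod Q P"
  obtains q p S where "x = enc q p S" "q \<in> Q" "p \<in> P" "S \<subseteq> P"
proof -
  from assms obtain t where t: "t \<in> Q \<times> P \<times> Pow P" "x = (\<lambda>(q,p,S). enc q p S) t"
    unfolding Qprod_def by blast
  obtain q p S where "t = (q, p, S)" by (cases t)
  with t that show ?thesis by auto
qed

lemma wf_prod:
  assumes "wf_aut Q q0 d" "wf_aut P p0 e"
  shows "wf_aut (Qprod Q P) (enc q0 p0 {}) (dprod d g e)"
proof -
  have "finite (Qprod Q P)" using assms by (simp add: Qprod_def wf_aut_def)
  moreover have "enc q0 p0 {} \<in> Qprod Q P" using assms by (force simp: Qprod_def wf_aut_def)
  moreover have "dprod d g e x a \<in> Qprod Q P" if xin: "x \<in> Qprod Q P" for x a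
  proof -
    obtain q p S where x: "x = enc q p S" "q \<in> Q" "p \<in> P" "S \<subseteq> P"
      using xin by (rule Qprod_E)
    show ?thesis unfolding x dprod_def Qprod_def using x assms
      by (intro image_eqI[where x="(d q a, dstar e p (g q a), visited e p (g q a))"])
         (auto simp: dstar_in[OF assms(2)] visited_in[OF assms(2)] wf_aut_def)
  qed
  ultimately show ?thesis by (simp add: wf_aut_def)
qed

lemma aperiodic_prod:
  assumes "wf_aut Q q0 d" "wf_aut P p0 e" "aperiodic_aut Q d" "aperiodic_aut P e"
  shows "aperiodic_aut (Qprod Q P) (dprod d g e)"
proof -
  obtain m1 where m1: "\<And>u q. q \<in> Q \<Longrightarrow> dstar d q (pw u m1) = dstar d q (pw u (Suc m1))"
    using assms(3) unfolding aperiodic_aut_def pw_def by blast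
  obtain m2 where m2: "\<And>u q. q \<in> P \<Longrightarrow> dstar e q (pw u m2) = dstar e q (pw u (Suc m2))"
    using assms(4) unfolding aperiodic_aut_def pw_def by blast
  have "dstar (dprod d g e) x (pw u (Suc (m1 + m2))) = dstar (dprod d g e) x (pw u (Suc (Suc (m1 + m2))))"
    if x: "x \<in> Qprod Q P" for u x
  proof (cases "u = []")
    case True then show ?thesis by (simp add: pw_def)
  next
    case False
    obtain q p S where x: "x = enc q p S" "q \<in> Q" "p \<in> P" "S \<subseteq> P"
      using x by (rule Qprod_E)
    define qs where "qs = dstar d q (pw u m1)"
    have qs: "dstar d qs u = qs" using m1[OF x(2), of u] by (simp only: qs_def pw_Suc2 dstar_simps(3))
    have qst: "dstar d q (pw u (m1 + j)) = qs" for j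
      using stable[of d q u m1 j] m1[OF x(2), of u] by (simp add: qs_def)
    define v where "v = gstar d g qs u"
    define p' where "p' = dstar e p (gstar d g q (pw u m1))"
    have p': "p' \<in> P" using x assms(2) by (simp add: p'_def dstar_in)
    have gst: "gstar d g q (pw u (m1 + j)) = gstar d g q (pw u m1) @ pw v j" for j
      by (simp only: pw_simps(3) gstar_append) (simp add: qs_def[symmetric] gstar_pw[OF qs] v_def)
    have e1: "pq (dstar (dprod d g e) x (pw u (m1 + m2))) = pq (dstar (dprod d g e) x (pw u (m1 + Suc m2)))"
      using dprod_proj qst x(1) by (metis enc_simps(1))
    have st: "dstar e p' (pw v (m2 + 1)) = dstar e p' (pw v m2)"
      using stable[of e p' v m2 1] m2[OF p', of v] by simp
    have ppj: "pp (dstar (dprod d g e) x (pw u (m1 + j))) = dstar e p' (pw v j)" for j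
    proof -
      have "pp (dstar (dprod d g e) x (pw u (m1 + j))) = dstar e p (gstar d g q (pw u (m1 + j)))"
        using dprod_proj[of d g e x "pw u (m1 + j)"] x(1) by simp
      also have "\<dots> = dstar e p' (pw v j)" by (simp only: gst p'_def dstar_simps(3))
      finally show ?thesis .
    qed
    have e2: "pp (dstar (dprod d g e) x (pw u (m1 + m2))) = pp (dstar (dprod d g e) x (pw u (m1 + Suc m2)))"
      unfolding ppj using st by simp
    have "dstar (dprod d g e) x (pw u (Suc (m1 + m2))) = dstar (dprod d g e) (dstar (dprod d g e) x (pw u (m1 + m2))) u"
      by (simp only: pw_Suc2 dstar_simps(3))
    also have "\<dots> = dstar (dprod d g e) (dstar (dprod d g e) x (pw u (m1 + Suc m2))) u"
      using dstar_det[OF False e1 e2] .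
    also have "\<dots> = dstar (dprod d g e) x (pw u (Suc (Suc (m1 + m2))))"
      by (simp only: pw_Suc2 dstar_simps(3) add_Suc_right)
    finally show ?thesis .
  qed
  then show ?thesis unfolding aperiodic_aut_def pw_def by blast
qed



lemma trans_out_Suc: "trans_out q0 d g w (Suc n) = trans_out q0 d g w n @ g (run d q0 w n) (w n)"
  by (simp add: trans_out_def)

lemma run_seg:
  assumes "\<forall>i<length v. z (s + i) = v ! i" "i \<le> length v"
  shows "run e p z (s + i) = dstar e (run e p z s) (take i v)"
  using assms(2)
proof (induction i)
  case 0 then show ?case by simp
next
  case (Suc i)
  then have "i < length v" by simp
  with Suc assms(1) show ?case by (simp add: take_Suc_conv_app_nth)
qed

lemma index_chunk:
  fixes len :: "nat \<Rightarrow> nat"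
  assumes "len 0 = 0" "\<forall>m. \<exists>n. m < len n"
  shows "\<exists>n. len n \<le> j \<and> j < len (Suc n)"
proof -
  define N where "N = (LEAST n. j < len n)"
  have N1: "j < len N" unfolding N_def using assms(2) by (meson LeastI)
  have N0: "N \<noteq> 0"
  proof
    assume "N = 0" with N1 assms(1) show False by simp
  qed
  have "\<not> j < len (N - 1)" unfolding N_def using N0 N_def not_less_Least by (metis diff_less less_numeral_extra(1) not_gr_zero)
  with N1 N0 show ?thesis by (intro exI[of _ "N - 1"]) auto
qed

lemma preimage_muller:
  assumes comp: "computes q0 d g h" and wfQ: "wf_aut Q q0 d" and wfP: "wf_aut P p0 e"
  shows "h -` muller_lang p0 e T = muller_lang (enc q0 p0 {}) (dprod d g e) {X. (\<Union>(pS ` X)) \<in> T}"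
proof (intro set_eqI)
  fix w
  define o' where "o' = trans_out q0 d g w"
  define len where "len n = length (o' n)" for n
  define r' where "r' = run e p0 (h w)"
  define R where "R = run (dprod d g e) (enc q0 p0 {}) w"
  define v where "v n = g (run d q0 w n) (w n)" for n
  have oS: "o' (Suc n) = o' n @ v n" for n by (simp add: o'_def v_def trans_out_Suc)
  have lenS: "len (Suc n) = len n + length (v n)" for n by (simp add: len_def oS)
  have len0: "len 0 = 0" by (simp add: len_def o'_def trans_out_def)
  have unb: "\<forall>m. \<exists>n. m < len n" using comp by (simp add: computes_def len_def o'_def)
  have hw: "h w j = o' n ! j" if "j < len n" for j n using comp that by (simp add: computes_def len_def o'_def)
  have mono: "len a \<le> len b" if "a \<le> b" for a b
    using that proof (induction b)
    case 0 then show ?case by simp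
  next
    case (Suc b) then show ?case by (cases "a = Suc b") (auto simp: lenS)
  qed
  have hv: "\<forall>i<length (v n). h w (len n + i) = v n ! i" for n
  proof (intro allI impI)
    fix i assume "i < length (v n)"
    then have "len n + i < len (Suc n)" by (simp add: lenS)
    then have "h w (len n + i) = o' (Suc n) ! (len n + i)" by (rule hw)
    then show "h w (len n + i) = v n ! i" by (simp add: oS nth_append len_def)
  qed
  have seg: "r' (len n + i) = dstar e (r' (len n)) (take i (v n))" if "i \<le> length (v n)" for n i
    unfolding r'_def using run_seg[OF hv that] .
  have RSuc: "R (Suc n) = dprod d g e (R n) (w n)" for n by (simp add: R_def)
  have Rpq: "pq (R n) = run d q0 w n \<and> pp (R n) = r' (len n)" for n
  proof (induction n)
    case 0 then show ?case by (simp add: R_def r'_def len0)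
  next
    case (Suc n)
    then show ?case using seg[of "length (v n)" n]
      by (simp add: RSuc dprod_def lenS v_def[symmetric])
  qed
  have RS: "pS (R (Suc n)) = r' ` {len n..<len (Suc n)}" for n
  proof -
    have "pS (R (Suc n)) = visited e (r' (len n)) (v n)"
      using Rpq[of n] by (simp add: RSuc dprod_def v_def)
    also have "\<dots> = r' ` {len n..<len (Suc n)}"
    proof
      show "visited e (r' (len n)) (v n) \<subseteq> r' ` {len n..<len (Suc n)}"
      proof
        fix y assume "y \<in> visited e (r' (len n)) (v n)"
        then obtain i where i: "i < length (v n)" "y = dstar e (r' (len n)) (take i (v n))"
          unfolding visited_def by auto
        then have "y = r' (len n + i)" using seg[of i n] by simp
        moreover have "len n + i \<in> {len n..<len (Suc n)}" using i by (simp add: lenS)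
        ultimately show "y \<in> r' ` {len n..<len (Suc n)}" by blast
      qed
      show "r' ` {len n..<len (Suc n)} \<subseteq> visited e (r' (len n)) (v n)"
      proof
        fix y assume "y \<in> r' ` {len n..<len (Suc n)}"
        then obtain j where j: "len n \<le> j" "j < len (Suc n)" "y = r' j" by auto
        define i where "i = j - len n"
        have i: "i < length (v n)" "j = len n + i" using j by (auto simp: i_def lenS)
        show "y \<in> visited e (r' (len n)) (v n)"
          unfolding visited_def using seg[of i n] i j by auto
      qed
    qed
    finally show ?thesis .
  qed
  have Rin: "R n \<in> Qprod Q P" for n unfolding R_def using run_in[OF wf_prod[OF wfQ wfP]] .
  have key: "{p. \<exists>\<^sub>\<infinity>j. r' j = p} = \<Union>(pS ` {x. \<exists>\<^sub>\<infinity>n. R n = x})"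
  proof
    show "{p. \<exists>\<^sub>\<infinity>j. r' j = p} \<subseteq> \<Union>(pS ` {x. \<exists>\<^sub>\<infinity>n. R n = x})"
    proof
      fix p assume "p \<in> {p. \<exists>\<^sub>\<infinity>j. r' j = p}"
      then have inf: "\<exists>\<^sub>\<infinity>j. r' j = p" by simp
      have "\<exists>n>m. p \<in> pS (R (Suc n))" for m
      proof -
        obtain j where j: "j \<ge> len (Suc m)" "r' j = p" using inf unfolding INFM_nat_le by blast
        obtain n where n: "len n \<le> j" "j < len (Suc n)" using index_chunk[OF len0 unb] by blast
        have "n > m"
        proof (rule ccontr)
          assume "\<not> m < n"
          then have "Suc n \<le> Suc m" by simp
          then have "len (Suc n) \<le> len (Suc m)" by (rule mono)
          with j n show False by simp
        qed
        moreover have "p \<in> pS (R (Suc n))" using RS[of n] n j by auto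
        ultimately show ?thesis by blast
      qed
      then have "infinite {n. p \<in> pS (R (Suc n))}"
        by (simp add: infinite_nat_iff_unbounded)
      moreover have "finite ((R \<circ> Suc) ` {n. p \<in> pS (R (Suc n))})"
      proof (rule finite_subset)
        show "(R \<circ> Suc) ` {n. p \<in> pS (R (Suc n))} \<subseteq> Qprod Q P" using Rin by auto
        show "finite (Qprod Q P)" using wf_prod[OF wfQ wfP] unfolding wf_aut_def by blast
      qed
      ultimately obtain n0 where n0: "p \<in> pS (R (Suc n0))"
        "infinite {n \<in> {n. p \<in> pS (R (Suc n))}. (R \<circ> Suc) n = (R \<circ> Suc) n0}"
        using pigeonhole_infinite by blast
      have "\<exists>\<^sub>\<infinity>n. R n = R (Suc n0)"
        unfolding INFM_nat
      proof
        fix m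
        from n0(2) obtain n where "n > m" "R (Suc n) = R (Suc n0)"
          unfolding infinite_nat_iff_unbounded by auto
        then show "\<exists>n>m. R n = R (Suc n0)" by (intro exI[of _ "Suc n"]) auto
      qed
      with n0(1) show "p \<in> \<Union>(pS ` {x. \<exists>\<^sub>\<infinity>n. R n = x})" by blast
    qed
    show "\<Union>(pS ` {x. \<exists>\<^sub>\<infinity>n. R n = x}) \<subseteq> {p. \<exists>\<^sub>\<infinity>j. r' j = p}"
    proof
      fix p assume "p \<in> \<Union>(pS ` {x. \<exists>\<^sub>\<infinity>n. R n = x})"
      then obtain x where x: "\<exists>\<^sub>\<infinity>n. R n = x" "p \<in> pS x" by blast
      have "\<exists>j>m. r' j = p" for m
      proof -
        obtain N where N: "m < len N" using unb by blast
        obtain n where n: "n > N" "R n = x" using x(1) unfolding INFM_nat by blast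
        then obtain n' where n': "n = Suc n'" "n' \<ge> N" by (cases n) auto
        have "p \<in> r' ` {len n'..<len (Suc n')}" using RS[of n'] n n' x(2) by simp
        then obtain j where "j \<ge> len n'" "r' j = p" by auto
        moreover have "len n' \<ge> len N" using n' mono by blast
        ultimately show ?thesis using N by (intro exI[of _ j]) auto
      qed
      then show "p \<in> {p. \<exists>\<^sub>\<infinity>j. r' j = p}" unfolding INFM_nat by blast
    qed
  qed
  show "w \<in> h -` muller_lang p0 e T \<longleftrightarrow> w \<in> muller_lang (enc q0 p0 {}) (dprod d g e) {X. (\<Union>(pS ` X)) \<in> T}"
    using key unfolding muller_lang_def r'_def R_def by simp
qed



lemma run_prefix: "(\<forall>i<N. v i = w i) \<Longrightarrow> n \<le> N \<Longrightarrow> run d q0 v n = run d q0 w n"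
  by (induction n) auto

lemma trans_out_prefix:
  assumes "\<forall>i<N. v i = w i"
  shows "trans_out q0 d g v N = trans_out q0 d g w N"
  unfolding trans_out_def using run_prefix[OF assms] assms
  by (intro arg_cong[where f=concat] map_cong) auto

lemma open_preimage:
  assumes comp: "computes q0 d g h" and op: "open_omega L"
  shows "open_omega (h -` L)"
  unfolding open_omega_def
proof
  fix w assume "w \<in> h -` L"
  then obtain n where n: "\<And>v. (\<forall>i<n. v i = h w i) \<Longrightarrow> v \<in> L"
    using op unfolding open_omega_def by blast
  obtain N where N: "n < length (trans_out q0 d g w N)" using comp unfolding computes_def by blast
  have "h v \<in> L" if v: "\<forall>i<N. v i = w i" for v
  proof (rule n, intro allI impI)
    fix i assume "i < n"
    then have i: "i < length (trans_out q0 d g w N)" using N by simp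
    then have i': "i < length (trans_out q0 d g v N)" using trans_out_prefix[OF v] by simp
    have "h v i = trans_out q0 d g v N ! i" using comp i' unfolding computes_def by blast
    also have "\<dots> = trans_out q0 d g w N ! i" by (simp add: trans_out_prefix[OF v])
    also have "\<dots> = h w i" using comp i unfolding computes_def by simp
    finally show "h v i = h w i" .
  qed
  then show "\<exists>N. \<forall>v. (\<forall>i<N. v i = w i) \<longrightarrow> v \<in> h -` L" by blast
qed

lemma closed_preimage:
  "computes q0 d g h \<Longrightarrow> closed_omega L \<Longrightarrow> closed_omega (h -` L)"
  unfolding closed_omega_def
  by (drule open_preimage[of q0 d g h "- L"]) (simp_all only: vimage_Compl)

lemma sigma02_preimage:
  assumes "computes q0 d g h" "sigma02 L"
  shows "sigma02 (h -` L)"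
proof -
  from assms(2)[unfolded sigma02_def] obtain C where
    C: "(\<forall>i. closed_omega (C i)) \<and> L = (\<Union>i::nat. C i)" by auto
  have "\<forall>i. closed_omega (h -` C i)" using C closed_preimage[OF assms(1)] by simp
  moreover have "h -` L = (\<Union>i::nat. h -` C i)" using C by (simp add: vimage_UN)
  ultimately show ?thesis unfolding sigma02_def by (intro exI[of _ "\<lambda>i. h -` C i"]) simp
qed

lemma regular_preimage:
  assumes "wf_aut Q q0 d" "computes q0 d g h" "regular_omega L"
  shows "regular_omega (h -` L)"
proof -
  obtain P p0 e T where P: "wf_aut P p0 e" "L = muller_lang p0 e T"
    using assms(3) unfolding regular_omega_def by blast
  show ?thesis unfolding regular_omega_def
    by (intro exI[of _ "Qprod Q P"] exI[of _ "enc q0 p0 {}"] exI[of _ "dprod d g e"]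
          exI[of _ "{X. (\<Union>(pS ` X)) \<in> T}"] conjI wf_prod[OF assms(1) P(1)])
       (simp add: P(2) preimage_muller[OF assms(2,1) P(1)])
qed

lemma aperiodic_preimage:
  assumes "wf_aut Q q0 d" "aperiodic_aut Q d" "computes q0 d g h" "aperiodic_omega L"
  shows "aperiodic_omega (h -` L)"
proof -
  obtain P p0 e T where P: "wf_aut P p0 e" "aperiodic_aut P e" "L = muller_lang p0 e T"
    using assms(4) unfolding aperiodic_omega_def by blast
  show ?thesis unfolding aperiodic_omega_def
    by (intro exI[of _ "Qprod Q P"] exI[of _ "enc q0 p0 {}"] exI[of _ "dprod d g e"]
          exI[of _ "{X. (\<Union>(pS ` X)) \<in> T}"] conjI wf_prod[OF assms(1) P(1)]
          aperiodic_prod[OF assms(1) P(1) assms(2) P(2)])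
       (simp add: P(3) preimage_muller[OF assms(3,1) P(1)])
qed



definition LP :: "'a set set \<Rightarrow> 'a set set \<Rightarrow> nat list set \<Rightarrow> (nat list \<Rightarrow> nat list set \<times> (nat list \<Rightarrow> nat))
    \<Rightarrow> ('a \<Rightarrow> nat) \<Rightarrow> (nat list \<Rightarrow> 'a set) \<Rightarrow> (nat list \<Rightarrow> nat list \<Rightarrow> 'a set) \<Rightarrow> bool" where
  "LP L0 L1 F c A U B \<longleftrightarrow>
       (let Ut = (\<lambda>\<tau>. U \<tau> - (\<Union>i\<in>{i. \<tau> @ [i] \<in> F}. U (\<tau> @ [i])));
            W = (\<lambda>\<tau> \<sigma>. Ut \<tau> \<inter> B \<tau> \<sigma>) in
        (\<forall>\<tau>\<in>F. U \<tau> \<in> L0)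
      \<and> (\<forall>\<tau> i. \<tau> @ [i] \<in> F \<longrightarrow> \<tau> \<in> F \<longrightarrow> U (\<tau> @ [i]) \<subseteq> U \<tau>)
      \<and> (\<Union>\<tau>\<in>F. U \<tau>) = UNIV
      \<and> (\<forall>\<tau>\<in>F. (\<forall>\<sigma>\<in>fst (c \<tau>). B \<tau> \<sigma> \<in> L1)
          \<and> (\<forall>\<sigma> i. \<sigma> @ [i] \<in> fst (c \<tau>) \<longrightarrow> W \<tau> (\<sigma> @ [i]) \<subseteq> W \<tau> \<sigma>)
          \<and> (\<Union>\<sigma>\<in>fst (c \<tau>). W \<tau> \<sigma>) = Ut \<tau>
          \<and> (\<forall>\<sigma>\<in>fst (c \<tau>). \<forall>x.
               x \<in> W \<tau> \<sigma> - (\<Union>i\<in>{i. \<sigma> @ [i] \<in> fst (c \<tau>)}. W \<tau> (\<sigma> @ [i]))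
               \<longrightarrow> A x = snd (c \<tau>) \<sigma>)))"

lemma Lclass_LP: "Lclass L0 L1 k F c = {A. (\<forall>x. A x < k) \<and> (\<exists>U B. LP L0 L1 F c A U B)}"
  unfolding Lclass_def LP_def ..

lemma LP_preimage:
  assumes H0: "LP L0 L1 F c A U B" and h0: "\<forall>X\<in>L0. h -` X \<in> L0" and h1: "\<forall>X\<in>L1. h -` X \<in> L1"
  shows "LP L0 L1 F c (A \<circ> h) (\<lambda>\<tau>. h -` U \<tau>) (\<lambda>\<tau> \<sigma>. h -` B \<tau> \<sigma>)"
proof -
  define Ut where "Ut \<tau> = U \<tau> - (\<Union>i\<in>{i. \<tau> @ [i] \<in> F}. U (\<tau> @ [i]))" for \<tau>
  define W where "W \<tau> \<sigma> = Ut \<tau> \<inter> B \<tau> \<sigma>" for \<tau> \<sigma>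
  have Ut': "h -` U \<tau> - (\<Union>i\<in>{i. \<tau> @ [i] \<in> F}. h -` U (\<tau> @ [i])) = h -` Ut \<tau>" for \<tau>
    by (auto simp: Ut_def)
  have W': "h -` Ut \<tau> \<inter> h -` B \<tau> \<sigma> = h -` W \<tau> \<sigma>" for \<tau> \<sigma>
    by (auto simp: W_def)
  have H: "(\<forall>\<tau>\<in>F. U \<tau> \<in> L0)
      \<and> (\<forall>\<tau> i. \<tau> @ [i] \<in> F \<longrightarrow> \<tau> \<in> F \<longrightarrow> U (\<tau> @ [i]) \<subseteq> U \<tau>)
      \<and> (\<Union>\<tau>\<in>F. U \<tau>) = UNIV
      \<and> (\<forall>\<tau>\<in>F. (\<forall>\<sigma>\<in>fst (c \<tau>). B \<tau> \<sigma> \<in> L1)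
          \<and> (\<forall>\<sigma> i. \<sigma> @ [i] \<in> fst (c \<tau>) \<longrightarrow> W \<tau> (\<sigma> @ [i]) \<subseteq> W \<tau> \<sigma>)
          \<and> (\<Union>\<sigma>\<in>fst (c \<tau>). W \<tau> \<sigma>) = Ut \<tau>
          \<and> (\<forall>\<sigma>\<in>fst (c \<tau>). \<forall>x.
               x \<in> W \<tau> \<sigma> - (\<Union>i\<in>{i. \<sigma> @ [i] \<in> fst (c \<tau>)}. W \<tau> (\<sigma> @ [i]))
               \<longrightarrow> A x = snd (c \<tau>) \<sigma>))"
    using H0 unfolding LP_def Let_def W_def Ut_def .
  note H1 = H[THEN conjunct1]
  note H2 = H[THEN conjunct2, THEN conjunct1]
  note H3 = H[THEN conjunct2, THEN conjunct2, THEN conjunct1]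
  note H4 = H[THEN conjunct2, THEN conjunct2, THEN conjunct2]
  show ?thesis
    unfolding LP_def Let_def Ut' W'
  proof (intro conjI ballI allI impI)
    show "\<And>\<tau>. \<tau> \<in> F \<Longrightarrow> h -` U \<tau> \<in> L0" using H1 h0 by simp
    show "\<And>\<tau> i. \<tau> @ [i] \<in> F \<Longrightarrow> \<tau> \<in> F \<Longrightarrow> h -` U (\<tau> @ [i]) \<subseteq> h -` U \<tau>"
      using H2 by (simp add: vimage_mono)
    show "(\<Union>\<tau>\<in>F. h -` U \<tau>) = UNIV" using H3
      by (simp flip: vimage_UN)
    fix \<tau> assume t: "\<tau> \<in> F"
    note c = H4[rule_format, OF t]
    note c1 = c[THEN conjunct1]
    note c2 = c[THEN conjunct2, THEN conjunct1]
    note c3 = c[THEN conjunct2, THEN conjunct2, THEN conjunct1]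
    note c4 = c[THEN conjunct2, THEN conjunct2, THEN conjunct2]
    show "\<And>\<sigma>. \<sigma> \<in> fst (c \<tau>) \<Longrightarrow> h -` B \<tau> \<sigma> \<in> L1" using c1 h1 by simp
    show "\<And>\<sigma> i. \<sigma> @ [i] \<in> fst (c \<tau>) \<Longrightarrow> h -` W \<tau> (\<sigma> @ [i]) \<subseteq> h -` W \<tau> \<sigma>"
      using c2 by (simp add: vimage_mono)
    show "(\<Union>\<sigma>\<in>fst (c \<tau>). h -` W \<tau> \<sigma>) = h -` Ut \<tau>"
      using c3 by (simp flip: vimage_UN)
    fix \<sigma> x
    assume s: "\<sigma> \<in> fst (c \<tau>)"
      and x: "x \<in> h -` W \<tau> \<sigma> - (\<Union>i\<in>{i. \<sigma> @ [i] \<in> fst (c \<tau>)}. h -` W \<tau> (\<sigma> @ [i]))"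
    have "h x \<in> W \<tau> \<sigma> - (\<Union>i\<in>{i. \<sigma> @ [i] \<in> fst (c \<tau>)}. W \<tau> (\<sigma> @ [i]))" using x by simp
    then show "(A \<circ> h) x = snd (c \<tau>) \<sigma>"
      using c4 s by simp
  qed
qed

lemma Lclass_preimage:
  assumes A: "A \<in> Lclass L0 L1 k F c" and h0: "\<forall>X\<in>L0. h -` X \<in> L0" and h1: "\<forall>X\<in>L1. h -` X \<in> L1"
  shows "A \<circ> h \<in> Lclass L0 L1 k F c"
proof -
  from A obtain U B where lt: "\<forall>x. A x < k" and L: "LP L0 L1 F c A U B" unfolding Lclass_LP by blast
  have "LP L0 L1 F c (A \<circ> h) (\<lambda>\<tau>. h -` U \<tau>) (\<lambda>\<tau> \<sigma>. h -` B \<tau> \<sigma>)"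
    by (rule LP_preimage[OF L h0 h1])
  then show ?thesis unfolding Lclass_LP using lt by auto
qed



theorem proposition4p12:
  fixes k :: nat
    and F :: "nat list set"
    and c :: "nat list \<Rightarrow> nat list set \<times> (nat list \<Rightarrow> nat)"
  assumes "card (UNIV :: 'x set) \<ge> 2"
    and "k \<ge> 2"
    and "forest_Tk k F c"
  shows "(\<forall>(A :: (nat \<Rightarrow> 'x::finite) \<Rightarrow> nat) B.
            DA_reducible B A \<and> A \<in> RSigma_F k F c \<longrightarrow> B \<in> RSigma_F k F c)
       \<and> (\<forall>(A :: (nat \<Rightarrow> 'x) \<Rightarrow> nat) B.
            AA_reducible B A \<and> A \<in> ASigma_F k F c \<longrightarrow> B \<in> ASigma_F k F c)"
proof (intro conjI allI impI)
  fix A B :: "(nat \<Rightarrow> 'x) \<Rightarrow> nat"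
  assume "DA_reducible B A \<and> A \<in> RSigma_F k F c"
  then obtain h Q q0 d g where B: "B = A \<circ> h" and A: "A \<in> RSigma_F k F c"
    and wf: "wf_aut Q q0 d" and comp: "computes q0 d g h"
    unfolding DA_reducible_def DA_function_def by blast
  show "B \<in> RSigma_F k F c" unfolding B using A unfolding RSigma_F_def
    by (rule Lclass_preimage)
       (auto simp: regular_preimage[OF wf comp] open_preimage[OF comp] sigma02_preimage[OF comp])
next
  fix A B :: "(nat \<Rightarrow> 'x) \<Rightarrow> nat"
  assume "AA_reducible B A \<and> A \<in> ASigma_F k F c"
  then obtain h Q q0 d g where B: "B = A \<circ> h" and A: "A \<in> ASigma_F k F c"
    and wf: "wf_aut Q q0 d" and ap: "aperiodic_aut Q d" and comp: "computes q0 d g h"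
    unfolding AA_reducible_def AA_function_def by blast
  show "B \<in> ASigma_F k F c" unfolding B using A unfolding ASigma_F_def
    by (rule Lclass_preimage)
       (auto simp: aperiodic_preimage[OF wf ap comp] open_preimage[OF comp] sigma02_preimage[OF comp])
qed

end
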